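(* Let $(X,\Phi)$ be a semitopological Mal'tsev space and let $\mathcal C$ be an epireflective subcategory of $\mathbf{Top}$ closed under supertopologies. Then the reflection arrow $\mathrm{r}_{(X,\mathcal C)}\colon X\to\mathrm{r}_{\mathcal C}X$ is an open map.
   Context: A Mal'tsev operation on $X$ is a map $\Phi\colon X^3\to X$ with $\Phi(x,x,y)=\Phi(y,x,x)=y$ for all $x,y\in X$; a semitopological Mal'tsev space is a space with a separately continuous Mal'tsev operation. An epireflective subcategory $\mathcal C$ of $\mathbf{Top}$ is a full, isomorphism-closed subcategory closed under products and subspaces; each space $X$ has a reflection $\mathrm{r}_{\mathcal C}X\in\mathcal C$ with a continuous surjection $\mathrm{r}_{(X,\mathcal C)}\colon X\to\mathrm{r}_{\mathcal C}X$ through which every continuous map from $X$ into a space of $\mathcal C$ factors uniquely. $\mathcal C$ is closed under supertopologies if $(X,\tau)\in\mathcal C$ and $\rho\supseteq\tau$ a topology on $X$ imply $(X,\rho)\in\mathcal C$. *)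

theory Defs
  imports "HOL-Analysis.Analysis"
begin

definition maltsev_operation :: "'a topology \<Rightarrow> ('a \<Rightarrow> 'a \<Rightarrow> 'a \<Rightarrow> 'a) \<Rightarrow> bool" where
  "maltsev_operation X \<Phi> \<longleftrightarrow>
     (\<forall>x\<in>topspace X. \<forall>y\<in>topspace X. \<forall>z\<in>topspace X. \<Phi> x y z \<in> topspace X) \<and>
     (\<forall>x\<in>topspace X. \<forall>y\<in>topspace X. \<Phi> x x y = y \<and> \<Phi> y x x = y)"

definition semitopological_maltsev :: "'a topology \<Rightarrow> ('a \<Rightarrow> 'a \<Rightarrow> 'a \<Rightarrow> 'a) \<Rightarrow> bool" where
  "semitopological_maltsev X \<Phi> \<longleftrightarrow> maltsev_operation X \<Phi> \<and>
     (\<forall>y\<in>topspace X. \<forall>z\<in>topspace X. continuous_map X X (\<lambda>x. \<Phi> x y z)) \<and>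
     (\<forall>x\<in>topspace X. \<forall>z\<in>topspace X. continuous_map X X (\<lambda>y. \<Phi> x y z)) \<and>
     (\<forall>x\<in>topspace X. \<forall>y\<in>topspace X. continuous_map X X (\<lambda>z. \<Phi> x y z))"

text \<open>A class of spaces (all carried by the type 'b) forming an epireflective
  subcategory: isomorphism-closed, closed under subspaces and (up to homeomorphism)
  under products of families indexed by subsets of 'b.\<close>
definition epireflective_class :: "('b topology \<Rightarrow> bool) \<Rightarrow> bool" where
  "epireflective_class C \<longleftrightarrow>
     (\<forall>Y Z. C Y \<and> Y homeomorphic_space Z \<longrightarrow> C Z) \<and>
     (\<forall>Y S. C Y \<longrightarrow> C (subtopology Y S)) \<and>
     (\<forall>(I::'b set) (Y::'b \<Rightarrow> 'b topology) (Z::'b topology).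
        (\<forall>i\<in>I. C (Y i)) \<and> Z homeomorphic_space product_topology Y I \<longrightarrow> C Z)"

definition closed_under_supertopologies :: "('b topology \<Rightarrow> bool) \<Rightarrow> bool" where
  "closed_under_supertopologies C \<longleftrightarrow>
     (\<forall>Y Y'. C Y \<and> topspace Y' = topspace Y \<and> (\<forall>U. openin Y U \<longrightarrow> openin Y' U) \<longrightarrow> C Y')"

definition is_reflection ::
  "('b topology \<Rightarrow> bool) \<Rightarrow> 'a topology \<Rightarrow> 'b topology \<Rightarrow> ('a \<Rightarrow> 'b) \<Rightarrow> bool" where
  "is_reflection C X R r \<longleftrightarrow> C R \<and> continuous_map X R r \<and> r ` topspace X = topspace R \<and>
     (\<forall>Y f. C Y \<and> continuous_map X Y f \<longrightarrow>
        (\<exists>g. continuous_map R Y g \<and> (\<forall>x\<in>topspace X. g (r x) = f x)) \<and>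
        (\<forall>g g'. continuous_map R Y g \<and> (\<forall>x\<in>topspace X. g (r x) = f x) \<and>
                continuous_map R Y g' \<and> (\<forall>x\<in>topspace X. g' (r x) = f x)
                \<longrightarrow> (\<forall>y\<in>topspace R. g y = g' y)))"

end

theory Submission
  imports Defs
begin

theorem proposition4p8:
  fixes X :: "'a topology" and \<Phi> :: "'a \<Rightarrow> 'a \<Rightarrow> 'a \<Rightarrow> 'a"
    and C :: "'b topology \<Rightarrow> bool" and R :: "'b topology" and r :: "'a \<Rightarrow> 'b"
  assumes "semitopological_maltsev X \<Phi>"
    and "epireflective_class C"
    and "closed_under_supertopologies C"
    and "is_reflection C X R r"
  shows "open_map X R r"
proof -
  have M: "maltsev_operation X \<Phi>" and c1: "\<And>y z. y \<in> topspace X \<Longrightarrow> z \<in> topspace X \<Longrightarrow> continuous_map X X (\<lambda>x. \<Phi> x y z)"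
    and c3: "\<And>x y. x \<in> topspace X \<Longrightarrow> y \<in> topspace X \<Longrightarrow> continuous_map X X (\<lambda>z. \<Phi> x y z)"
    using assms(1) unfolding semitopological_maltsev_def by auto
  have Mc: "\<And>x y z. x \<in> topspace X \<Longrightarrow> y \<in> topspace X \<Longrightarrow> z \<in> topspace X \<Longrightarrow> \<Phi> x y z \<in> topspace X"
    and M1: "\<And>x y. x \<in> topspace X \<Longrightarrow> y \<in> topspace X \<Longrightarrow> \<Phi> x x y = y"
    and M2: "\<And>x y. x \<in> topspace X \<Longrightarrow> y \<in> topspace X \<Longrightarrow> \<Phi> y x x = y"
    using M unfolding maltsev_operation_def by auto
  have CR: "C R" and rc: "continuous_map X R r" and rs: "r ` topspace X = topspace R"
    and fac: "\<And>Y f. C Y \<Longrightarrow> continuous_map X Y f \<Longrightarrow> \<exists>g. continuous_map R Y g \<and> (\<forall>x\<in>topspace X. g (r x) = f x)"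
    using assms(4) unfolding is_reflection_def by auto
  have cong: "r (\<Phi> x b a) = r (\<Phi> x b b)" if "x \<in> topspace X" "a \<in> topspace X" "b \<in> topspace X" "r a = r b" for x a b
  proof -
    have "continuous_map X R (r \<circ> (\<lambda>z. \<Phi> x b z))"
      using continuous_map_compose[OF c3 rc] that by auto
    then obtain g where "\<forall>z\<in>topspace X. g (r z) = r (\<Phi> x b z)"
      using fac[OF CR] by (auto simp: o_def)
    then show ?thesis using that by metis
  qed
  have sat: "openin X {x \<in> topspace X. r x \<in> r ` U}" if U: "openin X U" for U
  proof -
    have UX: "U \<subseteq> topspace X" using U openin_subset by auto
    have "{x \<in> topspace X. r x \<in> r ` U} =
      (\<Union>(a,b)\<in>{(a,b). a \<in> topspace X \<and> b \<in> topspace X \<and> r a = r b}. {x \<in> topspace X. \<Phi> x b a \<in> U})"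
    proof (rule set_eqI, rule iffI)
      fix x assume "x \<in> {x \<in> topspace X. r x \<in> r ` U}"
      then obtain u where "x \<in> topspace X" "u \<in> U" "r x = r u" by auto
      moreover have "\<Phi> x x u = u" using M1 UX calculation by auto
      ultimately have "x \<in> {x \<in> topspace X. \<Phi> x x u \<in> U}" "(u,x) \<in> {(a,b). a \<in> topspace X \<and> b \<in> topspace X \<and> r a = r b}"
        using UX by auto
      then show "x \<in> (\<Union>(a,b)\<in>{(a,b). a \<in> topspace X \<and> b \<in> topspace X \<and> r a = r b}. {x \<in> topspace X. \<Phi> x b a \<in> U})"
        by (intro UN_I[where a="(u,x)"]) auto
    next
      fix x assume "x \<in> (\<Union>(a,b)\<in>{(a,b). a \<in> topspace X \<and> b \<in> topspace X \<and> r a = r b}. {x \<in> topspace X. \<Phi> x b a \<in> U})"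
      then obtain a b where ab: "a \<in> topspace X" "b \<in> topspace X" "r a = r b" "x \<in> topspace X" "\<Phi> x b a \<in> U" by auto
      have "r (\<Phi> x b a) = r x" using cong[OF ab(4,1,2,3)] M2[OF ab(2,4)] by simp
      then show "x \<in> {x \<in> topspace X. r x \<in> r ` U}" using ab by (metis (mono_tags, lifting) image_eqI mem_Collect_eq)
    qed
    moreover have "openin X (\<Union>(a,b)\<in>{(a,b). a \<in> topspace X \<and> b \<in> topspace X \<and> r a = r b}. {x \<in> topspace X. \<Phi> x b a \<in> U})"
      using openin_continuous_map_preimage[OF c1 U] by (auto intro!: openin_Union)
    ultimately show ?thesis by simp
  qed
  define P where "P = (\<lambda>V. V \<subseteq> topspace R \<and> openin X {x \<in> topspace X. r x \<in> V})"
  have isT: "istopology P"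
    unfolding istopology_def P_def
  proof (intro conjI allI impI)
    fix S T assume "S \<subseteq> topspace R \<and> openin X {x \<in> topspace X. r x \<in> S}"
      "T \<subseteq> topspace R \<and> openin X {x \<in> topspace X. r x \<in> T}"
    then show "S \<inter> T \<subseteq> topspace R" "openin X {x \<in> topspace X. r x \<in> S \<inter> T}"
      using openin_Int[of X "{x \<in> topspace X. r x \<in> S}" "{x \<in> topspace X. r x \<in> T}"]
      by (auto simp: Collect_conj_eq[symmetric] conj_ac)
  next
    fix K assume K: "\<forall>S\<in>K. S \<subseteq> topspace R \<and> openin X {x \<in> topspace X. r x \<in> S}"
    then show "\<Union> K \<subseteq> topspace R" by auto
    have "{x \<in> topspace X. r x \<in> \<Union> K} = (\<Union>S\<in>K. {x \<in> topspace X. r x \<in> S})" by auto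
    then show "openin X {x \<in> topspace X. r x \<in> \<Union> K}" using K by auto
  qed
  define R' where "R' = topology P"
  have oR': "openin R' V \<longleftrightarrow> P V" for V unfolding R'_def using isT by simp
  have tR': "topspace R' = topspace R"
  proof
    show "topspace R' \<subseteq> topspace R" unfolding topspace_def using oR' P_def by auto
    have "openin X {x \<in> topspace X. r x \<in> topspace R}" proof -
      have "{x \<in> topspace X. r x \<in> topspace R} = topspace X" using rs by auto
      then show ?thesis by simp
    qed
    then have "openin R' (topspace R)" using oR' P_def by auto
    then show "topspace R \<subseteq> topspace R'" using openin_subset by auto
  qed
  have fin: "openin R' U" if "openin R U" for U
  proof -
    have "openin X {x \<in> topspace X. r x \<in> U}" using openin_continuous_map_preimage[OF rc that] .
    then show ?thesis using oR' P_def openin_subset[OF that] by auto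
  qed
  have CR': "C R'" using assms(3) CR tR' fin unfolding closed_under_supertopologies_def by blast
  have rc': "continuous_map X R' r"
    unfolding continuous_map tR' using rs oR' P_def by auto
  obtain g where g: "continuous_map R R' g" "\<forall>x\<in>topspace X. g (r x) = r x"
    using fac[OF CR' rc'] by auto
  have gid: "\<And>y. y \<in> topspace R \<Longrightarrow> g y = y" using g(2) rs by (metis imageE)
  show ?thesis unfolding open_map_def
  proof (intro allI impI)
    fix U assume U: "openin X U"
    have "openin R' (r ` U)" using oR' P_def sat[OF U] openin_subset[OF U] rs by auto
    then have "openin R {y \<in> topspace R. g y \<in> r ` U}" using openin_continuous_map_preimage[OF g(1)] by blast
    moreover have "{y \<in> topspace R. g y \<in> r ` U} = r ` U"
    proof -
      have rU: "r ` U \<subseteq> topspace R" using openin_subset[OF U] rs by auto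
      then have "\<And>y. y \<in> r ` U \<Longrightarrow> g y = y" using gid by auto
      then show ?thesis using rU gid by auto
    qed
    ultimately show "openin R (r ` U)" by simp
  qed
qed

end
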